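(* The Krull dimension of $\mathcal{S}'(\mathbb{Z}^{d})$ is infinite: for every $N\in\mathbb{N}$ there exist prime ideals $\mathfrak{p}_{N+1}\subsetneq\mathfrak{p}_N\subsetneq\cdots\subsetneq\mathfrak{p}_1$ of $\mathcal{S}'(\mathbb{Z}^{d})$, all proper.
   Context: For $\mathbf{n}=(n_1,\dots,n_d)\in\mathbb{Z}^d$ write $\|\mathbf{n}\|:=|n_1|+\cdots+|n_d|$. $\mathcal{S}'(\mathbb{Z}^{d})$ denotes the set of all maps $f:\mathbb{Z}^d\to\mathbb{C}$ of at most polynomial growth, i.e. for which there exist a real $M>0$ and an integer $m\geq 0$ with $|f(\mathbf{n})|\leq M(1+\|\mathbf{n}\|)^m$ for all $\mathbf{n}\in\mathbb{Z}^d$. It is a commutative unital ring under pointwise addition and multiplication. The Krull dimension of a commutative ring is the supremum of the lengths of chains of distinct proper prime ideals. *)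

theory Defs
  imports Complex_Main "HOL-Algebra.Ideal"
begin

text \<open>Points of Z^d are modelled as functions from a finite index type 'd
  (with d = CARD('d) \<ge> 1) to int; the l1 norm is the sum of absolute values.\<close>

definition l1norm :: "('d::finite \<Rightarrow> int) \<Rightarrow> int" where
  "l1norm n = (\<Sum>i\<in>UNIV. \<bar>n i\<bar>)"

definition tempered :: "(('d::finite \<Rightarrow> int) \<Rightarrow> complex) set" where
  "tempered = {f. \<exists>M::real. M > 0 \<and> (\<exists>m::nat. \<forall>n.
      cmod (f n) \<le> M * (1 + real_of_int (l1norm n)) ^ m)}"

definition S_ring :: "(('d::finite \<Rightarrow> int) \<Rightarrow> complex) ring" where
  "S_ring = \<lparr>carrier = tempered, monoid.mult = (\<lambda>f g x. f x * g x),
     one = (\<lambda>x. 1), zero = (\<lambda>x. 0), add = (\<lambda>f g x. f x + g x)\<rparr>"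

end

theory Submission
  imports Defs
begin


lemma l1norm_nonneg: "l1norm n \<ge> 0"
  unfolding l1norm_def by (simp add: sum_nonneg)

lemma temperedI: "M > 0 \<Longrightarrow> (\<And>n. cmod (f n) \<le> M * (1 + real_of_int (l1norm n)) ^ m) \<Longrightarrow> f \<in> tempered"
  unfolding tempered_def by blast

lemma tempered_add:
  fixes f g :: "('d::finite \<Rightarrow> int) \<Rightarrow> complex"
  assumes "f \<in> tempered" "g \<in> tempered" shows "(\<lambda>x. f x + g x) \<in> tempered"
proof -
  obtain M1 m1 where M1: "M1 > 0" "\<And>n. cmod (f n) \<le> M1 * (1 + real_of_int (l1norm n)) ^ m1"
    using assms(1) unfolding tempered_def by blast
  obtain M2 m2 where M2: "M2 > 0" "\<And>n. cmod (g n) \<le> M2 * (1 + real_of_int (l1norm n)) ^ m2"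
    using assms(2) unfolding tempered_def by blast
  show ?thesis
  proof (rule temperedI[of "M1 + M2" _ "max m1 m2"])
    show "M1 + M2 > 0" using M1 M2 by simp
    fix n :: "'d \<Rightarrow> int"
    let ?b = "1 + real_of_int (l1norm n)"
    have b: "?b \<ge> 1" using l1norm_nonneg[of n] by simp
    have "?b ^ m1 \<le> ?b ^ max m1 m2" "?b ^ m2 \<le> ?b ^ max m1 m2"
      using b by (auto intro: power_increasing)
    hence "M1 * ?b ^ m1 \<le> M1 * ?b ^ max m1 m2" "M2 * ?b ^ m2 \<le> M2 * ?b ^ max m1 m2"
      using M1 M2 by (auto intro: mult_left_mono)
    moreover have "cmod (f n + g n) \<le> cmod (f n) + cmod (g n)" by (rule norm_triangle_ineq)
    ultimately show "cmod (f n + g n) \<le> (M1 + M2) * ?b ^ max m1 m2"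
      using M1(2)[of n] M2(2)[of n] by (simp add: distrib_right)
  qed
qed

lemma tempered_mult:
  fixes f g :: "('d::finite \<Rightarrow> int) \<Rightarrow> complex"
  assumes "f \<in> tempered" "g \<in> tempered" shows "(\<lambda>x. f x * g x) \<in> tempered"
proof -
  obtain M1 m1 where M1: "M1 > 0" "\<And>n. cmod (f n) \<le> M1 * (1 + real_of_int (l1norm n)) ^ m1"
    using assms(1) unfolding tempered_def by blast
  obtain M2 m2 where M2: "M2 > 0" "\<And>n. cmod (g n) \<le> M2 * (1 + real_of_int (l1norm n)) ^ m2"
    using assms(2) unfolding tempered_def by blast
  show ?thesis
  proof (rule temperedI[of "M1 * M2" _ "m1 + m2"])
    show "M1 * M2 > 0" using M1 M2 by simp
    fix n :: "'d \<Rightarrow> int"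
    have "cmod (f n * g n) = cmod (f n) * cmod (g n)" by (simp add: norm_mult)
    also have "\<dots> \<le> (M1 * (1 + real_of_int (l1norm n)) ^ m1) * (M2 * (1 + real_of_int (l1norm n)) ^ m2)"
      using M1(2)[of n] M2(2)[of n] l1norm_nonneg[of n] M1(1) by (intro mult_mono) auto
    finally show "cmod (f n * g n) \<le> M1 * M2 * (1 + real_of_int (l1norm n)) ^ (m1 + m2)"
      by (simp add: power_add algebra_simps)
  qed
qed

lemma tempered_neg: "f \<in> tempered \<Longrightarrow> (\<lambda>x. - f x) \<in> tempered"
  unfolding tempered_def by simp

lemma tempered_const: "(\<lambda>x. c) \<in> tempered"
  by (rule temperedI[of "cmod c + 1" _ 0]) (auto simp: add_nonneg_pos)

lemma tempered_bounded: "(\<And>x. cmod (f x) \<le> 1) \<Longrightarrow> f \<in> tempered"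
  by (rule temperedI[of 1 _ 0]) auto

lemma S_cring: "cring (S_ring :: (('d::finite \<Rightarrow> int) \<Rightarrow> complex) ring)"
proof (rule cringI)
  show "abelian_group (S_ring :: (('d::finite \<Rightarrow> int) \<Rightarrow> complex) ring)"
    by (rule abelian_groupI)
       (auto simp: S_ring_def tempered_add tempered_const algebra_simps intro!: bexI[of _ "\<lambda>x. - _ x"] tempered_neg)
  show "comm_monoid (S_ring :: (('d::finite \<Rightarrow> int) \<Rightarrow> complex) ring)"
    by (rule comm_monoidI) (auto simp: S_ring_def tempered_mult tempered_const algebra_simps)
qed (auto simp: S_ring_def algebra_simps)

lemma S_a_inv: "f \<in> tempered \<Longrightarrow> a_inv (S_ring :: (('d::finite \<Rightarrow> int) \<Rightarrow> complex) ring) f = (\<lambda>x. - f x)"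
  apply (rule abelian_group.minus_equality)
  using S_cring cring.axioms ring.is_abelian_group apply blast
  by (auto simp: S_ring_def tempered_neg)



lemma ultra_exists:
  fixes F0 :: "'a filter"
  assumes F0: "F0 \<noteq> bot"
  shows "\<exists>U. U \<noteq> bot \<and> U \<le> F0 \<and> (\<forall>P. eventually P U \<or> eventually (\<lambda>x. \<not> P x) U)"
proof -
  define E where "E = (\<lambda>G::'a filter. {P. eventually P G})"
  have Einj: "E G \<subseteq> E H \<longleftrightarrow> H \<le> G" for G H
    unfolding E_def le_filter_def by auto
  define A where "A = E ` {G. G \<noteq> bot \<and> G \<le> F0}"
  have "\<exists>M\<in>A. \<forall>X\<in>A. M \<subseteq> X \<longrightarrow> X = M"
  proof (rule Zorn_Lemma2, intro ballI)
    fix C assume C: "C \<in> chains A"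
    show "\<exists>U\<in>A. \<forall>X\<in>C. X \<subseteq> U"
    proof (cases "C = {}")
      case True then show ?thesis using F0 unfolding A_def by auto
    next
      case False
      define B where "B = {G. G \<noteq> bot \<and> G \<le> F0 \<and> E G \<in> C}"
      have CB: "C = E ` B"
        using chainsD2[OF C] unfolding B_def A_def by auto
      have Bne: "B \<noteq> {}" using False CB by auto
      have base: "\<exists>x\<in>B. x \<le> inf F G" if "F \<in> B" "G \<in> B" for F G
      proof -
        have "E F \<subseteq> E G \<or> E G \<subseteq> E F" using chainsD[OF C] that CB by auto
        then show ?thesis
        proof
          assume "E F \<subseteq> E G" then have "G \<le> F" using Einj by blast
          then have "G \<le> inf F G" by simp
          then show ?thesis using that(2) by blast
        next
          assume "E G \<subseteq> E F" then have "F \<le> G" using Einj by blast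
          then have "F \<le> inf F G" by simp
          then show ?thesis using that(1) by blast
        qed
      qed
      have ev: "eventually P (Inf B) \<longleftrightarrow> (\<exists>b\<in>B. eventually P b)" for P
        by (rule eventually_Inf_base[OF Bne base])
      have "Inf B \<noteq> bot"
      proof
        assume "Inf B = bot"
        then have "eventually (\<lambda>_. False) (Inf B)" by simp
        then obtain b where "b \<in> B" "eventually (\<lambda>_. False) b" using ev by blast
        then show False unfolding B_def by (simp add: eventually_False)
      qed
      moreover have "Inf B \<le> F0"
      proof -
        obtain b where b: "b \<in> B" using Bne by blast
        then have "Inf B \<le> b" by (rule Inf_lower)
        also have "b \<le> F0" using b unfolding B_def by simp
        finally show ?thesis .
      qed
      ultimately have "E (Inf B) \<in> A" unfolding A_def by auto
      moreover have "\<forall>X\<in>C. X \<subseteq> E (Inf B)"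
      proof
        fix X assume "X \<in> C"
        then obtain b where b: "b \<in> B" "X = E b" using CB by blast
        have "Inf B \<le> b" using b(1) by (rule Inf_lower)
        then show "X \<subseteq> E (Inf B)" using b(2) Einj by blast
      qed
      ultimately show ?thesis by blast
    qed
  qed
  then obtain U where U: "U \<noteq> bot" "U \<le> F0" and max: "\<And>G. G \<noteq> bot \<Longrightarrow> G \<le> F0 \<Longrightarrow> E U \<subseteq> E G \<Longrightarrow> E G = E U"
    unfolding A_def by auto
  have "eventually P U \<or> eventually (\<lambda>x. \<not> P x) U" for P
  proof (rule ccontr)
    assume nn: "\<not> (eventually P U \<or> eventually (\<lambda>x. \<not> P x) U)"
    define G where "G = inf U (principal {x. P x})"
    have evG: "eventually Q G \<longleftrightarrow> eventually (\<lambda>x. P x \<longrightarrow> Q x) U" for Q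
      unfolding G_def by (simp add: eventually_inf_principal)
    have "G \<noteq> bot"
    proof
      assume "G = bot"
      then have "eventually (\<lambda>_. False) G" by simp
      then show False using nn evG by auto
    qed
    moreover have "G \<le> U" unfolding G_def by simp
    moreover have "G \<le> F0" using \<open>G \<le> U\<close> U(2) by (rule order_trans)
    ultimately have "E G = E U" using max Einj by blast
    moreover have "P \<in> E G" unfolding E_def using evG by simp
    ultimately show False using nn unfolding E_def by auto
  qed
  then show ?thesis using U by blast
qed



definition pt :: "nat \<Rightarrow> ('d::finite \<Rightarrow> int)" where
  "pt k = (\<lambda>i. if i = undefined then int k else 0)"

lemma l1norm_pt: "l1norm (pt k :: 'd::finite \<Rightarrow> int) = int k"
proof -
  have e: "\<And>i::'d. \<bar>if i = undefined then int k else 0\<bar> = (if i = undefined then int k else 0)"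
    by simp
  show ?thesis unfolding l1norm_def pt_def e by simp
qed

definition LL :: "nat \<Rightarrow> real" where "LL k = ln (real k + 3)"

lemma LL_ge1: "LL k \<ge> 1"
proof -
  have "exp 1 \<le> (3::real)" using exp_le by simp
  also have "\<dots> \<le> real k + 3" by simp
  finally show ?thesis unfolding LL_def by (subst ln_ge_iff) auto
qed

lemma LLpow_ge: "j \<ge> 1 \<Longrightarrow> LL k ^ j \<ge> LL k"
  using LL_ge1[of k] power_increasing[of 1 j "LL k"] by simp

lemma LLpow_ge1: "j \<ge> 1 \<Longrightarrow> LL k ^ j \<ge> 1"
  using LLpow_ge LL_ge1 order_trans by blast

definition Pset :: "nat filter \<Rightarrow> nat \<Rightarrow> (('d::finite \<Rightarrow> int) \<Rightarrow> complex) set" where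
  "Pset U j = {f \<in> tempered. \<forall>n::nat. eventually (\<lambda>k. cmod (f (pt k)) \<le> exp (- real n * LL k ^ j)) U}"

lemma exp_half: "s \<ge> 1 \<Longrightarrow> 2 * exp (- (real n + 1) * s) \<le> exp (- real n * s)"
proof -
  assume s: "s \<ge> 1"
  have "exp (- (real n + 1) * s) = exp (- real n * s) * exp (- s)"
    by (simp add: algebra_simps flip: exp_add)
  moreover have "exp (- s) \<le> exp (-1)" using s by simp
  moreover have "2 * exp (-1) \<le> (1::real)"
  proof -
    have "2 \<le> exp (1::real)" using exp_ge_add_one_self[of 1] by simp
    then show ?thesis by (simp add: exp_minus field_simps)
  qed
  ultimately have "2 * exp (- (real n + 1) * s) \<le> exp (- real n * s) * (2 * exp (-1))"
    by (simp add: mult_left_mono)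
  also have "\<dots> \<le> exp (- real n * s)" using \<open>2 * exp (-1) \<le> (1::real)\<close>
    by (simp add: mult_left_le)
  finally show ?thesis .
qed

lemma mult_bound:
  fixes M :: real and s :: real
  assumes s: "s \<ge> 1" "s \<ge> LL k" and M: "M > 0"
    and a: "A \<le> M * (1 + real k) ^ m" and A: "A \<ge> 0"
    and b: "B \<le> exp (- (real n + real (nat \<lceil>M\<rceil>) + real m) * s)"
  shows "A * B \<le> exp (- real n * s)"
proof -
  define c where "c = real (nat \<lceil>M\<rceil>)"
  have "M \<le> exp c"
  proof -
    have "M \<le> c" unfolding c_def by linarith
    also have "c \<le> exp c" using exp_ge_add_one_self[of c] by linarith
    finally show ?thesis .
  qed
  also have "exp c \<le> exp (c * s)" using s unfolding c_def
    by (simp add: mult_le_cancel_left1)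
  finally have Mc: "M \<le> exp (c * s)" .
  have "(1 + real k) ^ m \<le> (real k + 3) ^ m" by (intro power_mono) auto
  also have "\<dots> = exp (real m * LL k)" unfolding LL_def
    by (simp add: exp_of_nat_mult)
  also have "\<dots> \<le> exp (real m * s)" using s by (simp add: mult_left_mono)
  finally have km: "(1 + real k) ^ m \<le> exp (real m * s)" .
  have "M * (1 + real k) ^ m \<le> exp (c * s) * exp (real m * s)"
    using Mc km by (intro mult_mono) auto
  then have "A \<le> exp (c * s) * exp (real m * s)" using a by linarith
  then have "A \<le> exp ((c + real m) * s)" by (simp add: distrib_right exp_add)
  have "A * B \<le> exp ((c + real m) * s) * exp (- (real n + c + real m) * s)"
  proof (cases "B \<ge> 0")
    case True then show ?thesis using \<open>A \<le> exp ((c + real m) * s)\<close> b A unfolding c_def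
      by (intro mult_mono) auto
  next
    case False then have "A * B \<le> 0" using A by (simp add: mult_nonneg_nonpos)
    moreover have "0 < exp ((c + real m) * s) * exp (- (real n + c + real m) * s)"
      by simp
    ultimately show ?thesis by linarith
  qed
  also have "\<dots> = exp (- real n * s)" by (simp flip: exp_add add: algebra_simps)
  finally show ?thesis .
qed



locale UF =
  fixes U :: "nat filter"
  assumes U_nb: "U \<noteq> bot" and U_seq: "U \<le> sequentially"
    and U_ultra: "\<And>P. eventually P U \<or> eventually (\<lambda>x. \<not> P x) U"
begin

lemma not_ev_False: "\<not> eventually (\<lambda>_. False) U"
  using U_nb by (simp add: eventually_False)

lemma Pset_sub: "Pset U j \<subseteq> tempered" unfolding Pset_def by auto

lemma Pset_ideal:
  assumes j: "j \<ge> 1"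
  shows "ideal (Pset U j) (S_ring :: (('d::finite \<Rightarrow> int) \<Rightarrow> complex) ring)"
proof (rule idealI)
  show "ring (S_ring :: (('d::finite \<Rightarrow> int) \<Rightarrow> complex) ring)"
    using S_cring cring.axioms(1) by blast
  show "subgroup (Pset U j) (add_monoid (S_ring :: (('d::finite \<Rightarrow> int) \<Rightarrow> complex) ring))"
  proof (rule subgroup.intro)
    show "Pset U j \<subseteq> carrier (add_monoid (S_ring :: (('d::finite \<Rightarrow> int) \<Rightarrow> complex) ring))"
      using Pset_sub by (simp add: S_ring_def)
    show "\<one>\<^bsub>add_monoid (S_ring :: (('d::finite \<Rightarrow> int) \<Rightarrow> complex) ring)\<^esub> \<in> Pset U j"
      by (simp add: S_ring_def Pset_def tempered_const)
    fix f g :: "('d \<Rightarrow> int) \<Rightarrow> complex"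
    assume f: "f \<in> Pset U j"
    then have ft: "f \<in> tempered" unfolding Pset_def by auto
    have "inv\<^bsub>add_monoid (S_ring :: (('d::finite \<Rightarrow> int) \<Rightarrow> complex) ring)\<^esub> f = (\<lambda>x. - f x)"
      using S_a_inv[OF ft] unfolding a_inv_def by simp
    then show "inv\<^bsub>add_monoid (S_ring :: (('d::finite \<Rightarrow> int) \<Rightarrow> complex) ring)\<^esub> f \<in> Pset U j"
      using f by (simp add: Pset_def tempered_neg)
    assume g: "g \<in> Pset U j"
    have "(\<lambda>x. f x + g x) \<in> Pset U j"
      unfolding Pset_def
    proof (intro CollectI conjI allI)
      show "(\<lambda>x. f x + g x) \<in> tempered" using f g by (simp add: Pset_def tempered_add)
      fix n :: nat
      have Af: "\<forall>n::nat. eventually (\<lambda>k. cmod (f (pt k)) \<le> exp (- real n * LL k ^ j)) U"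
        using f unfolding Pset_def by blast
      have Ag: "\<forall>n::nat. eventually (\<lambda>k. cmod (g (pt k)) \<le> exp (- real n * LL k ^ j)) U"
        using g unfolding Pset_def by blast
      from Af[rule_format, of "n+1"] Ag[rule_format, of "n+1"] show "eventually (\<lambda>k. cmod (f (pt k) + g (pt k)) \<le> exp (- real n * LL k ^ j)) U"
      proof eventually_elim
        case (elim k)
        have "cmod (f (pt k) + g (pt k)) \<le> cmod (f (pt k)) + cmod (g (pt k))" by (rule norm_triangle_ineq)
        also have "\<dots> \<le> 2 * exp (- (real n + 1) * LL k ^ j)"
        proof -
          have "- real (n+1) = - (real n + 1)" by simp
          then show ?thesis using elim by (simp only:)
        qed
        also have "\<dots> \<le> exp (- real n * LL k ^ j)" by (rule exp_half[OF LLpow_ge1[OF j]])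
        finally show ?case .
      qed
    qed
    then show "f \<otimes>\<^bsub>add_monoid (S_ring :: (('d::finite \<Rightarrow> int) \<Rightarrow> complex) ring)\<^esub> g \<in> Pset U j"
      by (simp add: S_ring_def)
  qed
next
  have mult_closed: "(\<lambda>y. a y * x y) \<in> Pset U j" if a: "a \<in> Pset U j" and x: "x \<in> tempered"
    for a x :: "('d \<Rightarrow> int) \<Rightarrow> complex"
    unfolding Pset_def
  proof (intro CollectI conjI allI)
    show "(\<lambda>y. a y * x y) \<in> tempered" using a x by (simp add: Pset_def tempered_mult)
    obtain M m where M: "M > 0" "\<And>n. cmod (x n) \<le> M * (1 + real_of_int (l1norm n)) ^ m"
      using x unfolding tempered_def by blast
    fix n :: nat
    have Aa: "\<forall>n::nat. eventually (\<lambda>k. cmod (a (pt k)) \<le> exp (- real n * LL k ^ j)) U"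
      using a unfolding Pset_def by blast
    from Aa[rule_format, of "n + nat \<lceil>M\<rceil> + m"] show "eventually (\<lambda>k. cmod (a (pt k) * x (pt k)) \<le> exp (- real n * LL k ^ j)) U"
    proof eventually_elim
      case (elim k)
      have xb: "cmod (x (pt k)) \<le> M * (1 + real k) ^ m" using M(2)[of "pt k"] by (simp add: l1norm_pt)
      have "cmod (x (pt k)) * cmod (a (pt k)) \<le> exp (- real n * LL k ^ j)"
        by (rule mult_bound[OF LLpow_ge1[OF j] LLpow_ge[OF j] M(1) xb norm_ge_zero]) (use elim in simp)
      then show ?case by (simp add: norm_mult mult.commute)
    qed
  qed
  fix a x :: "('d \<Rightarrow> int) \<Rightarrow> complex" assume "a \<in> Pset U j" "x \<in> carrier (S_ring :: (('d::finite \<Rightarrow> int) \<Rightarrow> complex) ring)"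
  then show "x \<otimes>\<^bsub>S_ring :: (('d::finite \<Rightarrow> int) \<Rightarrow> complex) ring\<^esub> a \<in> Pset U j"
      "a \<otimes>\<^bsub>S_ring :: (('d::finite \<Rightarrow> int) \<Rightarrow> complex) ring\<^esub> x \<in> Pset U j"
    using mult_closed[of a x] by (simp_all add: S_ring_def mult.commute)
qed


lemma one_notin: "j \<ge> 1 \<Longrightarrow> (\<lambda>x. 1) \<notin> Pset U j"
proof
  assume j: "j \<ge> 1" and "(\<lambda>x. 1) \<in> Pset U j"
  then have "eventually (\<lambda>k. cmod (1::complex) \<le> exp (- real (1::nat) * LL k ^ j)) U"
    unfolding Pset_def by blast
  then have "eventually (\<lambda>_. False) U"
  proof eventually_elim
    case (elim k)
    have "exp (- (LL k ^ j)) < 1" using LLpow_ge1[OF j, of k] by simp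
    then show False using elim by simp
  qed
  then show False using not_ev_False by simp
qed

lemma Pset_prime:
  assumes j: "j \<ge> 1"
  shows "primeideal (Pset U j) (S_ring :: (('d::finite \<Rightarrow> int) \<Rightarrow> complex) ring)"
proof (rule primeidealI[OF Pset_ideal[OF j] S_cring])
  show "carrier (S_ring :: (('d::finite \<Rightarrow> int) \<Rightarrow> complex) ring) \<noteq> Pset U j"
    using one_notin[OF j] tempered_const[of 1] by (auto simp: S_ring_def)
  fix a b :: "('d \<Rightarrow> int) \<Rightarrow> complex"
  assume a: "a \<in> carrier (S_ring :: (('d::finite \<Rightarrow> int) \<Rightarrow> complex) ring)"
    and b: "b \<in> carrier (S_ring :: (('d::finite \<Rightarrow> int) \<Rightarrow> complex) ring)"
    and ab: "a \<otimes>\<^bsub>S_ring :: (('d::finite \<Rightarrow> int) \<Rightarrow> complex) ring\<^esub> b \<in> Pset U j"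
  show "a \<in> Pset U j \<or> b \<in> Pset U j"
  proof (rule ccontr)
    assume "\<not> (a \<in> Pset U j \<or> b \<in> Pset U j)"
    then obtain n1 n2 :: nat where
      n1: "\<not> eventually (\<lambda>k. cmod (a (pt k)) \<le> exp (- real n1 * LL k ^ j)) U" and
      n2: "\<not> eventually (\<lambda>k. cmod (b (pt k)) \<le> exp (- real n2 * LL k ^ j)) U"
      using a b unfolding Pset_def by (auto simp: S_ring_def)
    have e1: "eventually (\<lambda>k. \<not> cmod (a (pt k)) \<le> exp (- real n1 * LL k ^ j)) U"
      using n1 U_ultra by blast
    have e2: "eventually (\<lambda>k. \<not> cmod (b (pt k)) \<le> exp (- real n2 * LL k ^ j)) U"
      using n2 U_ultra by blast
    have Aab: "\<forall>n::nat. eventually (\<lambda>k. cmod (a (pt k) * b (pt k)) \<le> exp (- real n * LL k ^ j)) U"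
      using ab unfolding Pset_def by (simp add: S_ring_def)
    from e1 e2 Aab[rule_format, of "n1 + n2"] have "eventually (\<lambda>_. False) U"
    proof eventually_elim
      case (elim k)
      have "exp (- real n1 * LL k ^ j) * exp (- real n2 * LL k ^ j) < cmod (a (pt k)) * cmod (b (pt k))"
        using elim(1,2) by (intro mult_strict_mono) auto
      moreover have "exp (- real n1 * LL k ^ j) * exp (- real n2 * LL k ^ j) = exp (- real (n1 + n2) * LL k ^ j)"
        by (simp flip: exp_add add: algebra_simps)
      ultimately show False using elim(3) by (simp add: norm_mult)
    qed
    then show False using not_ev_False by simp
  qed
qed

lemma Pset_mono: "j \<ge> 1 \<Longrightarrow> (Pset U (Suc j) :: (('d::finite \<Rightarrow> int) \<Rightarrow> complex) set) \<subseteq> Pset U j"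
proof
  fix f :: "('d \<Rightarrow> int) \<Rightarrow> complex" assume j: "j \<ge> 1" and f: "f \<in> Pset U (Suc j)"
  show "f \<in> Pset U j" unfolding Pset_def
  proof (intro CollectI conjI allI)
    show "f \<in> tempered" using f unfolding Pset_def by auto
    fix n :: nat
    have A: "\<forall>n::nat. eventually (\<lambda>k. cmod (f (pt k)) \<le> exp (- real n * LL k ^ Suc j)) U"
      using f unfolding Pset_def by blast
    from A[rule_format, of n] show "eventually (\<lambda>k. cmod (f (pt k)) \<le> exp (- real n * LL k ^ j)) U"
    proof eventually_elim
      case (elim k)
      have "LL k ^ j \<le> LL k ^ Suc j" using LL_ge1[of k] by (intro power_increasing) auto
      then have "real n * LL k ^ j \<le> real n * LL k ^ Suc j" by (intro mult_left_mono) auto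
      then have "exp (- real n * LL k ^ Suc j) \<le> exp (- real n * LL k ^ j)" by simp
      then show ?case using elim by linarith
    qed
  qed
qed

definition wit :: "nat \<Rightarrow> ('d::finite \<Rightarrow> int) \<Rightarrow> complex" where
  "wit j y = complex_of_real (exp (- ((ln (real_of_int (l1norm y) + 3)) ^ Suc j)))"

lemma wit_pt: "cmod (wit j (pt k :: 'd::finite \<Rightarrow> int)) = exp (- (LL k ^ Suc j))"
  unfolding wit_def LL_def by (simp add: l1norm_pt)

lemma wit_in: "j \<ge> 1 \<Longrightarrow> (wit j :: ('d::finite \<Rightarrow> int) \<Rightarrow> complex) \<in> Pset U j"
  unfolding Pset_def
proof (intro CollectI conjI allI)
  show "(wit j :: ('d \<Rightarrow> int) \<Rightarrow> complex) \<in> tempered"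
  proof (rule tempered_bounded)
    fix y :: "'d::finite \<Rightarrow> int"
    have "0 \<le> ln (real_of_int (l1norm y) + 3)" using l1norm_nonneg[of y] by simp
    then have "0 \<le> (ln (real_of_int (l1norm y) + 3)) ^ Suc j" by (rule zero_le_power)
    then show "cmod (wit j y) \<le> 1" unfolding wit_def by simp
  qed
  fix n :: nat
  have "eventually (\<lambda>k. k \<ge> nat \<lceil>exp (real n)\<rceil>) sequentially" by (rule eventually_ge_at_top)
  then have "eventually (\<lambda>k. k \<ge> nat \<lceil>exp (real n)\<rceil>) U" by (rule filter_leD[OF U_seq])
  then show "eventually (\<lambda>k. cmod (wit j (pt k :: 'd \<Rightarrow> int)) \<le> exp (- real n * LL k ^ j)) U"
  proof eventually_elim
    case (elim k)
    have "exp (real n) \<le> real k + 3" using elim by linarith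
    then have nL: "real n \<le> LL k" unfolding LL_def by (subst ln_ge_iff) auto
    have "real n * LL k ^ j \<le> LL k * LL k ^ j"
      using nL LL_ge1[of k] by (intro mult_right_mono) auto
    then show ?case unfolding wit_pt by simp
  qed
qed

lemma wit_notin: "(wit j :: ('d::finite \<Rightarrow> int) \<Rightarrow> complex) \<notin> Pset U (Suc j)"
proof
  assume "(wit j :: ('d \<Rightarrow> int) \<Rightarrow> complex) \<in> Pset U (Suc j)"
  then have A: "\<forall>n::nat. eventually (\<lambda>k. cmod (wit j (pt k :: 'd \<Rightarrow> int)) \<le> exp (- real n * LL k ^ Suc j)) U"
    unfolding Pset_def by blast
  from A[rule_format, of 2]
  have "eventually (\<lambda>_. False) U"
  proof eventually_elim
    case (elim k)
    have "LL k ^ Suc j > 0" using LL_ge1[of k] by simp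
    then have "exp (- real (2::nat) * LL k ^ Suc j) < exp (- (LL k ^ Suc j))" by simp
    moreover have "cmod (wit j (pt k :: 'd \<Rightarrow> int)) = exp (- (LL k ^ Suc j))" by (rule wit_pt)
    ultimately show False using elim by linarith
  qed
  then show False using not_ev_False by simp
qed

end

lemma UF_exists: "\<exists>U. UF U"
  using ultra_exists[of "sequentially :: nat filter"] unfolding UF_def by simp

theorem theorem4p4:
  fixes N :: nat
  shows "\<exists>p :: nat \<Rightarrow> ((('d::finite \<Rightarrow> int) \<Rightarrow> complex) set).
           (\<forall>i\<in>{1..N+1}. primeideal (p i) (S_ring :: (('d \<Rightarrow> int) \<Rightarrow> complex) ring)
                             \<and> p i \<noteq> carrier (S_ring :: (('d \<Rightarrow> int) \<Rightarrow> complex) ring))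
         \<and> (\<forall>i\<in>{1..N}. p (Suc i) \<subset> p i)"
proof -
  obtain U where U: "UF U" using UF_exists by blast
  interpret UF U by (rule U)
  show ?thesis
  proof (intro exI[of _ "Pset U"] conjI ballI)
    fix i assume "i \<in> {1..N+1}"
    then have i: "i \<ge> 1" by simp
    show "primeideal (Pset U i) (S_ring :: (('d \<Rightarrow> int) \<Rightarrow> complex) ring)"
      by (rule Pset_prime[OF i])
    show "Pset U i \<noteq> carrier (S_ring :: (('d \<Rightarrow> int) \<Rightarrow> complex) ring)"
      using one_notin[OF i] tempered_const[of 1] by (auto simp: S_ring_def)
  next
    fix i assume "i \<in> {1..N}"
    then have i: "i \<ge> 1" by simp
    show "Pset U (Suc i) \<subset> (Pset U i :: (('d \<Rightarrow> int) \<Rightarrow> complex) set)"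
      using Pset_mono[OF i] wit_in[OF i] wit_notin[of i] by blast
  qed
qed

end
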